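(* Let $m\ge 38$ and let $G$ be a graph with maximum spectral radius among all $H(4,3)$-free graphs with $m$ edges and no isolated vertices. Then $G$ is connected.
   Context: All graphs are simple and undirected; the spectral radius $\rho(G)$ is the largest adjacency eigenvalue. $H(4,3)$ is the graph formed by a cycle of length $4$ and a triangle sharing exactly one common vertex. *)

theory Defs
  imports Complex_Main
begin

definition simple_graph :: "nat set \<Rightarrow> nat set set \<Rightarrow> bool" where
  "simple_graph V E \<longleftrightarrow> finite V \<and> (\<forall>e\<in>E. e \<subseteq> V \<and> card e = 2)"

definition no_isolated :: "nat set \<Rightarrow> nat set set \<Rightarrow> bool" where
  "no_isolated V E \<longleftrightarrow> (\<forall>v\<in>V. \<exists>e\<in>E. v \<in> e)"

definition contains_H43 :: "nat set \<Rightarrow> nat set set \<Rightarrow> bool" where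
  "contains_H43 V E \<longleftrightarrow> (\<exists>a b c d x y.
     a \<in> V \<and> b \<in> V \<and> c \<in> V \<and> d \<in> V \<and> x \<in> V \<and> y \<in> V \<and>
     distinct [a, b, c, d, x, y] \<and>
     {a, b} \<in> E \<and> {b, c} \<in> E \<and> {c, d} \<in> E \<and> {d, a} \<in> E \<and>
     {a, x} \<in> E \<and> {x, y} \<in> E \<and> {y, a} \<in> E)"

definition H43_free :: "nat set \<Rightarrow> nat set set \<Rightarrow> bool" where
  "H43_free V E \<longleftrightarrow> \<not> contains_H43 V E"

text \<open>lambda is an eigenvalue of the adjacency matrix A (indexed by V):
A x = lambda x for some nonzero real vector x on V. (A is real symmetric,
so all its eigenvalues are real with real eigenvectors.)\<close>
definition adj_eigenvalue :: "nat set \<Rightarrow> nat set set \<Rightarrow> real \<Rightarrow> bool" where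
  "adj_eigenvalue V E lam \<longleftrightarrow> (\<exists>x :: nat \<Rightarrow> real. (\<exists>v\<in>V. x v \<noteq> 0) \<and>
     (\<forall>v\<in>V. (\<Sum>u\<in>{u\<in>V. {u, v} \<in> E}. x u) = lam * x v))"

definition spectral_radius :: "nat set \<Rightarrow> nat set set \<Rightarrow> real" where
  "spectral_radius V E = Max {lam. adj_eigenvalue V E lam}"

definition connected_graph :: "nat set \<Rightarrow> nat set set \<Rightarrow> bool" where
  "connected_graph V E \<longleftrightarrow>
     (\<forall>u\<in>V. \<forall>v\<in>V. (u, v) \<in> {(p, q). {p, q} \<in> E}\<^sup>*)"

definition H43_free_class :: "nat \<Rightarrow> nat set \<Rightarrow> nat set set \<Rightarrow> bool" where
  "H43_free_class m V E \<longleftrightarrow> simple_graph V E \<and> card E = m \<and> no_isolated V E \<and> H43_free V E"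

end

theory Submission
  imports Defs "HOL-Analysis.Analysis" Jordan_Normal_Form.Char_Poly
begin

definition QF :: "nat set \<Rightarrow> (nat \<Rightarrow> nat \<Rightarrow> real) \<Rightarrow> (nat \<Rightarrow> real) \<Rightarrow> real" where
  "QF V a x = (\<Sum>v\<in>V. \<Sum>u\<in>V. a u v * x u * x v)"
definition NF :: "nat set \<Rightarrow> (nat \<Rightarrow> real) \<Rightarrow> real" where
  "NF V x = (\<Sum>v\<in>V. (x v)^2)"

lemma exists_max:
  assumes "finite V" "V \<noteq> {}"
  shows "\<exists>x. NF V x = 1 \<and> (\<forall>y. NF V y = 1 \<longrightarrow> QF V a y \<le> QF V a x)"
proof -
  let ?X = "product_topology (\<lambda>_. euclideanreal) V"
  let ?P = "PiE V (\<lambda>_. {-1..1::real})"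
  have c1: "compactin ?X ?P"
    by (simp add: compactin_PiE)
  have cQ: "continuous_map ?X euclideanreal (QF V a)"
    unfolding QF_def
    by (intro continuous_intros assms continuous_map_product_projection) 
  have cN: "continuous_map ?X euclideanreal (NF V)"
    unfolding NF_def
    by (intro continuous_intros assms continuous_map_product_projection) 
  have cl: "closedin ?X {x \<in> topspace ?X. NF V x \<in> {1}}"
    by (rule closedin_continuous_map_preimage[OF cN]) simp
  have tp: "topspace ?X = PiE V (\<lambda>_. UNIV)" by simp
  let ?K = "{x \<in> topspace ?X. NF V x \<in> {1}} \<inter> ?P"
  have cK: "compactin ?X ?K" using closed_Int_compactin[OF cl c1] .
  have "compactin euclideanreal (QF V a ` ?K)"
    using image_compactin[OF cK cQ] .
  hence comp: "compact (QF V a ` ?K)" by simp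
  obtain v0 where v0: "v0 \<in> V" using assms by auto
  define e where "e = (\<lambda>v. if v = v0 then (1::real) else 0)"
  have "(\<Sum>v\<in>V. (restrict e V v)^2) = (\<Sum>v\<in>V. if v = v0 then 1 else 0)"
    by (rule sum.cong) (auto simp: e_def)
  also have "\<dots> = 1" using v0 assms by simp
  finally have "restrict e V \<in> ?K"
    using v0 assms by (auto simp: NF_def e_def PiE_def)
  hence ne: "QF V a ` ?K \<noteq> {}" by blast
  obtain z where zK: "z \<in> ?K" and zmax: "\<forall>w\<in>?K. QF V a w \<le> QF V a z"
    using compact_attains_sup[OF comp ne] by blast
  show ?thesis
  proof (intro exI conjI allI impI)
    show "NF V z = 1" using zK by simp
    fix y assume y: "NF V y = 1"
    have sq: "\<And>v. v \<in> V \<Longrightarrow> (y v)^2 \<le> 1"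
    proof -
      fix v assume "v \<in> V"
      have "(y v)^2 \<le> (\<Sum>u\<in>V. (y u)^2)"
        using \<open>v \<in> V\<close> assms(1) by (intro member_le_sum) auto
      thus "(y v)^2 \<le> 1" using y by (simp add: NF_def)
    qed
    have sq2: "\<And>v. v \<in> V \<Longrightarrow> -1 \<le> y v \<and> y v \<le> 1"
      using sq by (simp add: abs_square_le_1 abs_le_iff)
    have "restrict y V \<in> ?K"
      using sq2 y by (auto simp: NF_def PiE_def abs_le_square_iff[symmetric] abs_le_iff)
    hence "QF V a (restrict y V) \<le> QF V a z" using zmax by blast
    moreover have "QF V a (restrict y V) = QF V a y" by (simp add: QF_def)
    ultimately show "QF V a y \<le> QF V a z" by simp
  qed
qed

lemma quad_zero:
  fixes c d :: real
  assumes "\<forall>t. 0 \<le> c*t + d*t^2"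
  shows "c = 0"
proof (rule ccontr)
  assume c: "c \<noteq> 0"
  define D where "D = \<bar>d\<bar> + 1"
  define t where "t = - c / D"
  have pos: "D > 0" by (simp add: D_def)
  have "c*t + d*t^2 = c^2 / D^2 * (d - D)"
    using pos by (simp add: t_def field_simps power2_eq_square)
  also have "\<dots> < 0"
  proof (rule mult_pos_neg)
    show "0 < c^2 / D^2" using c pos by simp
    show "d - D < 0" unfolding D_def by linarith
  qed
  finally show False using assms by (metis not_le)
qed

lemma QF_scale: "QF V a (\<lambda>v. c * y v) = c^2 * QF V a y"
  by (simp add: QF_def sum_distrib_left algebra_simps power2_eq_square)

lemma NF_scale: "NF V (\<lambda>v. c * y v) = c^2 * NF V y"
  by (simp add: NF_def sum_distrib_left algebra_simps power2_eq_square)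

lemma NF_nonneg: "0 \<le> NF V y" by (simp add: NF_def sum_nonneg)

lemma NF_zero: assumes "finite V" "NF V y = 0" "v \<in> V" shows "y v = 0"
proof -
  have "\<forall>v\<in>V. (y v)^2 = 0" using assms sum_nonneg_eq_0_iff[of V "\<lambda>v. (y v)^2"]
    by (simp add: NF_def)
  thus ?thesis using assms by simp
qed

lemma QF_zero: assumes "finite V" "NF V y = 0" shows "QF V a y = 0"
  using NF_zero[OF assms] by (simp add: QF_def)

lemma Q_le_all:
  assumes fin: "finite V" and x1: "NF V x = 1"
    and mx: "\<forall>y. NF V y = 1 \<longrightarrow> QF V a y \<le> QF V a x"
  shows "QF V a y \<le> QF V a x * NF V y"
proof (cases "NF V y = 0")
  case True
  thus ?thesis using QF_zero[OF fin True] by simp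
next
  case False
  hence p: "NF V y > 0" using NF_nonneg[of V y] by linarith
  define s where "s = 1 / sqrt (NF V y)"
  have s2: "s^2 = 1 / NF V y" using p by (simp add: s_def power_divide)
  have "NF V (\<lambda>v. s * y v) = 1" using p by (simp add: NF_scale s2)
  hence "QF V a (\<lambda>v. s * y v) \<le> QF V a x" using mx by blast
  hence "QF V a y / NF V y \<le> QF V a x" by (simp add: QF_scale s2)
  thus ?thesis using p by (simp add: divide_le_eq)
qed

definition BF :: "nat set \<Rightarrow> (nat \<Rightarrow> nat \<Rightarrow> real) \<Rightarrow> (nat \<Rightarrow> real) \<Rightarrow> (nat \<Rightarrow> real) \<Rightarrow> real" where
  "BF V a x z = (\<Sum>v\<in>V. \<Sum>u\<in>V. a u v * x u * z v)"

lemma BF_sym: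
  assumes "\<forall>u\<in>V. \<forall>v\<in>V. a u v = a v u"
  shows "BF V a z x = BF V a x z"
proof -
  have "BF V a z x = (\<Sum>u\<in>V. \<Sum>v\<in>V. a u v * z u * x v)" unfolding BF_def
    by (rule sum.swap)
  also have "\<dots> = (\<Sum>u\<in>V. \<Sum>v\<in>V. a v u * x v * z u)"
    using assms by (intro sum.cong refl) (auto simp: mult_ac)
  also have "\<dots> = BF V a x z" unfolding BF_def by (rule refl)
  finally show ?thesis .
qed

lemma QF_expand:
  assumes "\<forall>u\<in>V. \<forall>v\<in>V. a u v = a v u"
  shows "QF V a (\<lambda>v. x v + t * z v) = QF V a x + 2 * t * BF V a x z + t^2 * QF V a z"
proof -
  have "QF V a (\<lambda>v. x v + t * z v) = QF V a x + t * (BF V a x z + BF V a z x) + t^2 * QF V a z"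
    by (simp add: QF_def BF_def sum_distrib_left sum.distrib[symmetric] algebra_simps power2_eq_square)
  thus ?thesis using BF_sym[OF assms] by simp
qed

lemma NF_expand:
  "NF V (\<lambda>v. x v + t * z v) = NF V x + 2 * t * (\<Sum>v\<in>V. x v * z v) + t^2 * NF V z"
  by (simp add: NF_def sum_distrib_left sum.distrib[symmetric] algebra_simps power2_eq_square)

definition geig :: "nat set \<Rightarrow> (nat \<Rightarrow> nat \<Rightarrow> real) \<Rightarrow> real \<Rightarrow> (nat \<Rightarrow> real) \<Rightarrow> bool" where
  "geig V a lam x \<longleftrightarrow> (\<exists>v\<in>V. x v \<noteq> 0) \<and> (\<forall>v\<in>V. (\<Sum>u\<in>V. a u v * x u) = lam * x v)"

lemma top_eig:
  assumes fin: "finite V" and ne: "V \<noteq> {}" and sym: "\<forall>u\<in>V. \<forall>v\<in>V. a u v = a v u"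
  shows "\<exists>mu x. geig V a mu x \<and> (\<forall>y. QF V a y \<le> mu * NF V y)"
proof -
  obtain x where x1: "NF V x = 1" and mx: "\<forall>y. NF V y = 1 \<longrightarrow> QF V a y \<le> QF V a x"
    using exists_max[OF fin ne] by blast
  define mu where "mu = QF V a x"
  have le: "\<And>y. QF V a y \<le> mu * NF V y" unfolding mu_def using Q_le_all[OF fin x1 mx] .
  have key: "BF V a x z = mu * (\<Sum>v\<in>V. x v * z v)" for z
  proof -
    have "\<forall>t. 0 \<le> 2 * (mu * (\<Sum>v\<in>V. x v * z v) - BF V a x z) * t + (mu * NF V z - QF V a z) * t^2"
    proof
      fix t
      have "QF V a (\<lambda>v. x v + t * z v) \<le> mu * NF V (\<lambda>v. x v + t * z v)" by (rule le)
      thus "0 \<le> 2 * (mu * (\<Sum>v\<in>V. x v * z v) - BF V a x z) * t + (mu * NF V z - QF V a z) * t^2"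
        unfolding QF_expand[OF sym] NF_expand x1 by (simp add: mu_def algebra_simps)
    qed
    from quad_zero[OF this] show ?thesis by simp
  qed
  have "geig V a mu x"
    unfolding geig_def
  proof (intro conjI ballI)
    show "\<exists>v\<in>V. x v \<noteq> 0"
    proof (rule ccontr)
      assume "\<not> (\<exists>v\<in>V. x v \<noteq> 0)"
      hence "NF V x = 0" by (simp add: NF_def)
      thus False using x1 by simp
    qed
    fix w assume w: "w \<in> V"
    have "BF V a x (\<lambda>v. if v = w then 1 else 0) = (\<Sum>v\<in>V. if v = w then (\<Sum>u\<in>V. a u w * x u) else 0)"
      unfolding BF_def by (intro sum.cong refl) auto
    also have "\<dots> = (\<Sum>u\<in>V. a u w * x u)" using w fin by (simp add: sum.delta)
    finally have "BF V a x (\<lambda>v. if v = w then 1 else 0) = (\<Sum>u\<in>V. a u w * x u)" .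
    moreover have "(\<Sum>v\<in>V. x v * (if v = w then 1 else 0)) = x w"
      using w fin by (simp add: if_distrib[of "\<lambda>c. _ * c"] sum.delta cong: if_cong)
    ultimately show "(\<Sum>u\<in>V. a u w * x u) = mu * x w" using key by metis
  qed
  thus ?thesis using le by blast
qed

lemma geig_QF: assumes "geig V a lam x" shows "QF V a x = lam * NF V x"
proof -
  have "QF V a x = (\<Sum>v\<in>V. x v * (\<Sum>u\<in>V. a u v * x u))"
    by (simp add: QF_def sum_distrib_left algebra_simps)
  also have "\<dots> = (\<Sum>v\<in>V. x v * (lam * x v))"
    using assms unfolding geig_def by (intro sum.cong) auto
  also have "\<dots> = lam * NF V x" by (simp add: NF_def sum_distrib_left power2_eq_square algebra_simps)
  finally show ?thesis .
qed

lemma geig_finite: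
  assumes fin: "finite V"
  shows "finite {lam. \<exists>x. geig V a lam x}"
proof -
  define n where "n = card V"
  obtain f where bij: "bij_betw f {0..<n} V"
    using ex_bij_betw_nat_finite[OF fin] unfolding n_def by blast
  define A :: "real mat" where "A = mat n n (\<lambda>(i,j). a (f j) (f i))"
  have A: "A \<in> carrier_mat n n" by (simp add: A_def)
  have sub: "{lam. \<exists>x. geig V a lam x} \<subseteq> {lam. poly (char_poly A) lam = 0}"
  proof
    fix lam assume "lam \<in> {lam. \<exists>x. geig V a lam x}"
    then obtain x where g: "geig V a lam x" by blast
    define v where "v = vec n (\<lambda>i. x (f i))"
    have "eigenvector A v lam"
      unfolding eigenvector_def
    proof (intro conjI)
      show "v \<in> carrier_vec (dim_row A)" using A by (simp add: v_def)
      obtain w where w: "w \<in> V" "x w \<noteq> 0" using g unfolding geig_def by blast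
      then obtain i where i: "i < n" "f i = w" using bij
        by (metis atLeastLessThan_iff bij_betw_iff_bijections)
      have "v $ i \<noteq> 0" using i w by (simp add: v_def)
      thus "v \<noteq> 0\<^sub>v (dim_row A)" using i A by auto
      show "A *\<^sub>v v = lam \<cdot>\<^sub>v v"
      proof (rule eq_vecI)
        show "dim_vec (A *\<^sub>v v) = dim_vec (lam \<cdot>\<^sub>v v)" using A by (simp add: v_def)
        fix i assume "i < dim_vec (lam \<cdot>\<^sub>v v)"
        hence i: "i < n" by (simp add: v_def)
        have fi: "f i \<in> V" using bij i bij_betwE by fastforce
        have "(A *\<^sub>v v) $ i = (\<Sum>j\<in>{0..<n}. a (f j) (f i) * x (f j))"
          using i A by (simp add: A_def v_def scalar_prod_def)
        also have "\<dots> = (\<Sum>u\<in>V. a u (f i) * x u)"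
          using sum.reindex_bij_betw[OF bij, of "\<lambda>u. a u (f i) * x u"] by simp
        also have "\<dots> = lam * x (f i)" using g fi unfolding geig_def by blast
        also have "\<dots> = (lam \<cdot>\<^sub>v v) $ i" using i by (simp add: v_def)
        finally show "(A *\<^sub>v v) $ i = (lam \<cdot>\<^sub>v v) $ i" .
      qed
    qed
    hence "eigenvalue A lam" unfolding eigenvalue_def by blast
    thus "lam \<in> {lam. poly (char_poly A) lam = 0}"
      using eigenvalue_root_char_poly[OF A] by simp
  qed
  have "coeff (char_poly A) n = 1" using degree_monic_char_poly[OF A] by simp
  hence "char_poly A \<noteq> 0" by auto
  hence "finite {lam. poly (char_poly A) lam = 0}" by (rule poly_roots_finite)
  thus ?thesis using sub finite_subset by blast
qed

definition adjw :: "nat set set \<Rightarrow> nat \<Rightarrow> nat \<Rightarrow> real" where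
  "adjw E u v = (if {u, v} \<in> E then 1 else 0)"

lemma adjw_sym: "adjw E u v = adjw E v u"
  by (simp add: adjw_def insert_commute)

lemma adj_eig_iff:
  assumes "finite V"
  shows "adj_eigenvalue V E lam \<longleftrightarrow> (\<exists>x. geig V (adjw E) lam x)"
proof -
  have "\<And>x v. (\<Sum>u\<in>{u\<in>V. {u, v} \<in> E}. x u) = (\<Sum>u\<in>V. adjw E u v * x u)"
    using assms by (simp add: sum.inter_filter adjw_def) (intro sum.cong, auto)
  thus ?thesis unfolding adj_eigenvalue_def geig_def by simp
qed

lemma NF_pos: assumes "finite V" "v \<in> V" "x v \<noteq> 0" shows "NF V x > 0"
  using NF_zero[OF assms(1) _ assms(2)] assms(3) NF_nonneg[of V x] by force

lemma rho_props:
  assumes fin: "finite V" and ne: "V \<noteq> {}"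
  shows "(\<exists>x. geig V (adjw E) (spectral_radius V E) x) \<and>
         (\<forall>y. QF V (adjw E) y \<le> spectral_radius V E * NF V y)"
proof -
  obtain mu x where g: "geig V (adjw E) mu x" and le: "\<forall>y. QF V (adjw E) y \<le> mu * NF V y"
    using top_eig[OF fin ne, of "adjw E"] adjw_sym by blast
  let ?S = "{lam. adj_eigenvalue V E lam}"
  have S: "?S = {lam. \<exists>x. geig V (adjw E) lam x}" using adj_eig_iff[OF fin] by simp
  have "Max ?S = mu"
  proof (rule Max_eqI)
    show "finite ?S" unfolding S by (rule geig_finite[OF fin])
    show "mu \<in> ?S" unfolding S using g by blast
    fix lam assume "lam \<in> ?S"
    then obtain z where gz: "geig V (adjw E) lam z" unfolding S by blast
    then obtain v where "v \<in> V" "z v \<noteq> 0" unfolding geig_def by blast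
    hence p: "NF V z > 0" using NF_pos[OF fin] by blast
    have "lam * NF V z \<le> mu * NF V z" using geig_QF[OF gz] le by metis
    thus "lam \<le> mu" using p by simp
  qed
  hence "spectral_radius V E = mu" by (simp add: spectral_radius_def)
  show ?thesis unfolding \<open>spectral_radius V E = mu\<close>
  proof (intro conjI)
    show "\<exists>x. geig V (adjw E) mu x" using g by blast
    show "\<forall>y. QF V (adjw E) y \<le> mu * NF V y" using le .
  qed
qed

lemma QF_add: "QF S (\<lambda>u v. a u v + b u v) y = QF S a y + QF S b y"
  by (simp add: QF_def sum.distrib[symmetric] algebra_simps)

lemma QF_restrict:
  assumes "finite S" "S' \<subseteq> S" "\<And>u v. a u v * y u * y v \<noteq> 0 \<Longrightarrow> u \<in> S' \<and> v \<in> S'"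
  shows "QF S a y = QF S' a y"
proof -
  have z: "\<And>u v. u \<notin> S' \<or> v \<notin> S' \<Longrightarrow> a u v * y u * y v = 0" using assms(3) by blast
  have fS': "finite S'" using assms finite_subset by blast
  have "QF S a y = (\<Sum>v\<in>S. \<Sum>u\<in>S'. a u v * y u * y v)"
    unfolding QF_def
    by (intro sum.cong refl sum.mono_neutral_right[OF assms(1) assms(2)]) (auto simp: z)
  also have "\<dots> = QF S' a y"
    unfolding QF_def
    by (intro sum.mono_neutral_right[OF assms(1) assms(2)]) (auto simp: z)
  finally show ?thesis .
qed

lemma QF_transpose: "QF S (\<lambda>u v. a v u) y = QF S a y"
proof -
  have "QF S (\<lambda>u v. a v u) y = (\<Sum>u\<in>S. \<Sum>v\<in>S. a v u * y u * y v)" unfolding QF_def by (rule sum.swap)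
  also have "\<dots> = QF S a y" unfolding QF_def by (simp add: mult_ac)
  finally show ?thesis .
qed

lemma sum_delta_mult: "finite S \<Longrightarrow> (\<Sum>u\<in>S. (if u = w then 1 else 0) * f u) = (if w \<in> S then f w else (0::real))"
proof -
  assume "finite S"
  have "(\<Sum>u\<in>S. (if u = w then 1 else 0) * f u) = (\<Sum>u\<in>S. if u = w then f u else 0)"
    by (rule sum.cong) auto
  thus ?thesis using \<open>finite S\<close> by (simp add: sum.delta')
qed

lemma QF_pend:
  assumes fin: "finite S" and wS: "w \<in> S" and PS: "P \<subseteq> S" and wP: "w \<notin> P"
    and yP: "\<forall>p\<in>P. y p = e"
  shows "QF S (\<lambda>u v. if u = w \<and> v \<in> P then 1 else 0) y = real (card P) * y w * e"
proof -
  have finP: "finite P" using fin PS finite_subset by blast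
  have "QF S (\<lambda>u v. if u = w \<and> v \<in> P then 1 else 0) y
      = (\<Sum>v\<in>S. if v \<in> P then y w * e else 0)"
    unfolding QF_def
  proof (rule sum.cong[OF refl])
    fix v assume "v \<in> S"
    show "(\<Sum>u\<in>S. (if u = w \<and> v \<in> P then 1 else 0) * y u * y v) = (if v \<in> P then y w * e else 0)"
    proof (cases "v \<in> P")
      case True
      have "(\<Sum>u\<in>S. (if u = w \<and> v \<in> P then 1 else 0) * y u * y v) = (\<Sum>u\<in>S. (if u = w then 1 else 0) * (y u * y v))"
        using True by (intro sum.cong) auto
      also have "\<dots> = y w * y v" using sum_delta_mult[OF fin, of w "\<lambda>u. y u * y v"] wS by simp
      finally show ?thesis using True yP by simp
    qed simp
  qed
  also have "\<dots> = (\<Sum>v\<in>P. y w * e)"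
    using fin PS by (simp add: sum.If_cases Int_absorb1 inf.absorb2)
  finally show ?thesis by simp
qed

theorem mainTheorem3:
  fixes m :: nat and V :: "nat set" and E :: "nat set set"
  assumes "m \<ge> 38"
    and "H43_free_class m V E"
    and "\<forall>V' E'. H43_free_class m V' E' \<longrightarrow> spectral_radius V' E' \<le> spectral_radius V E"
  shows "connected_graph V E"
proof (rule ccontr)
  assume nc: "\<not> connected_graph V E"
  have finV: "finite V" and edg: "\<And>e. e \<in> E \<Longrightarrow> e \<subseteq> V \<and> card e = 2"
    and cE: "card E = m" and ni: "no_isolated V E" and hf: "H43_free V E"
    using assms(2) unfolding H43_free_class_def simple_graph_def by auto
  have "E \<subseteq> Pow V" using edg by auto
  hence finE: "finite E" using finV finite_subset by blast
  have "E \<noteq> {}" using cE assms(1) by auto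
  then obtain e0 where "e0 \<in> E" by blast
  hence "e0 \<noteq> {}" "e0 \<subseteq> V" using edg[of e0] by auto
  hence Vne: "V \<noteq> {}" by blast
  define lam where "lam = spectral_radius V E"
  obtain x where gx: "geig V (adjw E) lam x"
    using rho_props[OF finV Vne, of E] unfolding lam_def by blast
  obtain w where wV: "w \<in> V" and xw: "x w \<noteq> 0" using gx unfolding geig_def by blast
  define R where "R = {(p, q). {p, q} \<in> E}"
  define C where "C = {v. (w, v) \<in> R\<^sup>*}"
  have Rsym: "(q, p) \<in> R\<^sup>*" if "(p, q) \<in> R\<^sup>*" for p q
    using that
  proof (induction rule: rtrancl_induct)
    case base then show ?case by simp
  next
    case (step b c)
    hence "(c, b) \<in> R" unfolding R_def by (simp add: insert_commute)
    thus ?case using step converse_rtrancl_into_rtrancl by metis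
  qed
  have CV: "C \<subseteq> V"
  proof
    fix v assume "v \<in> C"
    hence "(w, v) \<in> R\<^sup>*" by (simp add: C_def)
    thus "v \<in> V"
    proof (induction rule: rtrancl_induct)
      case base then show ?case using wV by simp
    next
      case (step b c)
      hence "{b, c} \<in> E" by (simp add: R_def)
      thus ?case using edg by blast
    qed
  qed
  have wC: "w \<in> C" by (simp add: C_def)
  have clos: "v \<in> C" if "u \<in> C" "{u, v} \<in> E" for u v
    using that rtrancl_into_rtrancl[of w u R v] by (simp add: C_def R_def)
  have clos': "v \<in> C" if "u \<in> C" "{v, u} \<in> E" for u v
    using clos[OF that(1)] that(2) by (simp add: insert_commute)
  have clos2: "e \<subseteq> C" if h: "e \<in> E" "u \<in> e" "u \<in> C" for e u
  proof -
    have "card e = 2" using edg[OF h(1)] by blast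
    then obtain a b where eab: "e = {a, b}" by (auto simp: card_2_iff)
    have "a \<in> C \<and> b \<in> C"
    proof (cases "u = a")
      case True
      hence aC: "a \<in> C" using h by simp
      have "b \<in> C" using clos[OF aC] h(1) eab by simp
      thus ?thesis using aC by simp
    next
      case False
      hence bC: "b \<in> C" using h eab by simp
      have "a \<in> C" using clos'[OF bC] h(1) eab by simp
      thus ?thesis using bC by simp
    qed
    thus ?thesis using eab by simp
  qed
  obtain z where zV: "z \<in> V" and zC: "z \<notin> C"
  proof -
    obtain u0 v0 where "u0 \<in> V" "v0 \<in> V" "(u0, v0) \<notin> R\<^sup>*"
      using nc unfolding connected_graph_def R_def by blast
    moreover have "(u0, v0) \<in> R\<^sup>*" if "u0 \<in> C" "v0 \<in> C"
      using that Rsym[of w u0] unfolding C_def by (meson mem_Collect_eq rtrancl_trans)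
    ultimately show ?thesis using that by blast
  qed
  obtain ez where ez: "ez \<in> E" "z \<in> ez" using ni zV unfolding no_isolated_def by blast
  define EC where "EC = {e \<in> E. e \<subseteq> C}"
  have ECE: "EC \<subseteq> E" by (auto simp: EC_def)
  have "ez \<notin> EC" using ez zC by (auto simp: EC_def)
  hence "EC \<subset> E" using ECE ez by blast
  hence cEC: "card EC < m" using psubset_card_mono[OF finE] cE by blast
  define k where "k = m - card EC"
  have kpos: "k > 0" using cEC by (simp add: k_def)
  define xC where "xC = (\<lambda>v. if v \<in> C then x v else 0)"
  have gC: "geig V (adjw E) lam xC"
    unfolding geig_def
  proof (intro conjI ballI)
    show "\<exists>v\<in>V. xC v \<noteq> 0" using wV wC xw by (auto simp: xC_def)
    fix v assume vV: "v \<in> V"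
    show "(\<Sum>u\<in>V. adjw E u v * xC u) = lam * xC v"
    proof (cases "v \<in> C")
      case True
      have "(\<Sum>u\<in>V. adjw E u v * xC u) = (\<Sum>u\<in>V. adjw E u v * x u)"
        by (rule sum.cong) (use True clos' in \<open>auto simp: adjw_def xC_def\<close>)
      also have "\<dots> = lam * x v" using gx vV unfolding geig_def by blast
      finally show ?thesis using True by (simp add: xC_def)
    next
      case False
      have "(\<Sum>u\<in>V. adjw E u v * xC u) = (\<Sum>u\<in>V. 0)"
        by (rule sum.cong) (use False clos in \<open>auto simp: adjw_def xC_def\<close>)
      thus ?thesis using False by (simp add: xC_def)
    qed
  qed
  have QxC: "QF V (adjw E) xC = lam * NF V xC" by (rule geig_QF[OF gC])
  define y where "y = (\<lambda>v. \<bar>xC v\<bar>)"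
  have adjw_nn: "adjw F u v \<ge> 0" for F u v by (simp add: adjw_def)
  have Qy: "QF V (adjw E) xC \<le> QF V (adjw E) y"
    unfolding QF_def y_def
  proof (intro sum_mono)
    fix v u
    have "xC u * xC v \<le> \<bar>xC u\<bar> * \<bar>xC v\<bar>" by (metis abs_ge_self abs_mult)
    from mult_left_mono[OF this adjw_nn[of E u v]]
    show "adjw E u v * xC u * xC v \<le> adjw E u v * \<bar>xC u\<bar> * \<bar>xC v\<bar>" by (simp add: mult_ac)
  qed
  have Ny: "NF V y = NF V xC" by (simp add: NF_def y_def)
  define yw where "yw = \<bar>x w\<bar>"
  have ywpos: "yw > 0" using xw by (simp add: yw_def)
  have yw: "y w = yw" using wC by (simp add: y_def xC_def yw_def)
  define eps where "eps = yw / (\<bar>lam\<bar> + 1)"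
  have epspos: "eps > 0" using ywpos by (simp add: eps_def)
  have lameps: "lam * eps < yw"
  proof -
    have "lam * eps \<le> \<bar>lam\<bar> * eps" using epspos by (simp add: mult_right_mono)
    also have "\<dots> < (\<bar>lam\<bar> + 1) * eps" using epspos by simp
    also have "\<dots> = yw" by (simp add: eps_def)
    finally show ?thesis .
  qed
  define N0 where "N0 = Max V + 1"
  define P where "P = {N0..<N0 + k}"
  have PV: "p \<notin> V" if "p \<in> P" for p
  proof
    assume "p \<in> V"
    hence "p \<le> Max V" using finV by simp
    thus False using that by (simp add: P_def N0_def)
  qed
  have cP: "card P = k" by (simp add: P_def)
  have finP: "finite P" by (simp add: P_def)
  have wP: "w \<notin> P" using PV wV by blast
  have CP: "C \<inter> P = {}" using PV CV by blast
  define Pend where "Pend = (\<lambda>p. {w, p}) ` P"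
  define V' where "V' = C \<union> P"
  define E' where "E' = EC \<union> Pend"
  have pend_iff: "{u, v} \<in> Pend \<longleftrightarrow> (u = w \<and> v \<in> P) \<or> (v = w \<and> u \<in> P)" for u v
    unfolding Pend_def by (auto simp: doubleton_eq_iff)
  have EC_C: "u \<in> C \<and> v \<in> C" if "{u, v} \<in> EC" for u v using that by (auto simp: EC_def)
  have disj: "EC \<inter> Pend = {}"
  proof -
    have "e \<notin> Pend" if h: "e \<in> EC" for e
    proof
      assume "e \<in> Pend"
      then obtain p where "p \<in> P" "e = {w, p}" by (auto simp: Pend_def)
      hence "p \<in> C" using h by (auto simp: EC_def)
      thus False using PV CV \<open>p \<in> P\<close> by blast
    qed
    thus ?thesis by blast
  qed
  have finC: "finite C" using CV finV finite_subset by blast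
  have finV': "finite V'" using finC finP by (simp add: V'_def)
  have nbr: "t = w" if "p \<in> P" "{p, t} \<in> E'" for p t
  proof -
    have "{p, t} \<notin> EC" using EC_C[of p t] that(1) PV CV by blast
    hence "{p, t} \<in> Pend" using that(2) by (simp add: E'_def)
    thus ?thesis using pend_iff[of p t] wP that(1) by blast
  qed
  have nbr': "t = w" if "p \<in> P" "{t, p} \<in> E'" for p t
    using nbr[OF that(1)] that(2) by (simp add: insert_commute)
  have edgE: "{s, t} \<in> E" if "{s, t} \<in> E'" "s \<notin> P" "t \<notin> P" for s t
  proof -
    have "{s, t} \<notin> Pend" using pend_iff that(2,3) by blast
    hence "{s, t} \<in> EC" using that(1) by (simp add: E'_def)
    thus ?thesis using ECE by blast
  qed
  have cls: "H43_free_class m V' E'"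
    unfolding H43_free_class_def
  proof (intro conjI)
    have "\<forall>e\<in>E'. e \<subseteq> V' \<and> card e = 2"
    proof
      fix e assume "e \<in> E'"
      thus "e \<subseteq> V' \<and> card e = 2"
      proof (cases "e \<in> EC")
        case True thus ?thesis using edg by (auto simp: EC_def V'_def)
      next
        case False
        hence "e \<in> Pend" using \<open>e \<in> E'\<close> by (simp add: E'_def)
        then obtain p where "p \<in> P" "e = {w, p}" by (auto simp: Pend_def)
        moreover have "w \<noteq> p" using \<open>p \<in> P\<close> wP by blast
        ultimately show ?thesis using wC by (auto simp: V'_def)
      qed
    qed
    thus "simple_graph V' E'" unfolding simple_graph_def using finV' by blast
    have "inj_on (\<lambda>p. {w, p}) P" using wP by (auto simp: inj_on_def doubleton_eq_iff)
    hence "card Pend = k" using cP by (simp add: Pend_def card_image)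
    moreover have "finite EC" using ECE finE finite_subset by blast
    moreover have "finite Pend" using finP by (simp add: Pend_def)
    ultimately show "card E' = m" using disj cEC unfolding E'_def k_def
      by (simp add: card_Un_disjoint)
    show "no_isolated V' E'"
      unfolding no_isolated_def
    proof
      fix v assume "v \<in> V'"
      show "\<exists>e\<in>E'. v \<in> e"
      proof (cases "v \<in> C")
        case True
        then obtain e where "e \<in> E" "v \<in> e" using ni CV unfolding no_isolated_def by blast
        hence "e \<in> EC" using clos2 True by (simp add: EC_def)
        thus ?thesis using \<open>v \<in> e\<close> by (auto simp: E'_def)
      next
        case False
        hence "v \<in> P" using \<open>v \<in> V'\<close> by (simp add: V'_def)
        hence "{w, v} \<in> E'" by (auto simp: E'_def Pend_def)
        thus ?thesis by blast
      qed
    qed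
    show "H43_free V' E'"
      unfolding H43_free_def
    proof
      assume "contains_H43 V' E'"
      then obtain a b c d p q where
        vs: "a \<in> V'" "b \<in> V'" "c \<in> V'" "d \<in> V'" "p \<in> V'" "q \<in> V'"
        and dis: "distinct [a, b, c, d, p, q]"
        and es: "{a, b} \<in> E'" "{b, c} \<in> E'" "{c, d} \<in> E'" "{d, a} \<in> E'"
           "{a, p} \<in> E'" "{p, q} \<in> E'" "{q, a} \<in> E'"
        unfolding contains_H43_def by blast
      have dd: "a \<noteq> b" "a \<noteq> c" "a \<noteq> d" "a \<noteq> p" "a \<noteq> q" "b \<noteq> c" "b \<noteq> d"
        "b \<noteq> p" "b \<noteq> q" "c \<noteq> d" "c \<noteq> p" "c \<noteq> q" "d \<noteq> p" "d \<noteq> q" "p \<noteq> q"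
        using dis by auto
      have nP1: "a \<notin> P" using nbr[OF _ es(1)] nbr'[OF _ es(4)] dd(7) by blast
      have nP2: "b \<notin> P" using nbr'[OF _ es(1)] nbr[OF _ es(2)] dd(2) by blast
      have nP3: "c \<notin> P" using nbr'[OF _ es(2)] nbr[OF _ es(3)] dd(7) by blast
      have nP4: "d \<notin> P" using nbr'[OF _ es(3)] nbr[OF _ es(4)] dd(2) by blast
      have nP5: "p \<notin> P" using nbr'[OF _ es(5)] nbr[OF _ es(6)] dd(5) by blast
      have nP6: "q \<notin> P" using nbr'[OF _ es(6)] nbr[OF _ es(7)] dd(4) by blast
      have inV: "a \<in> V" "b \<in> V" "c \<in> V" "d \<in> V" "p \<in> V" "q \<in> V"
        using vs nP1 nP2 nP3 nP4 nP5 nP6 CV by (auto simp: V'_def)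
      have e1: "{a, b} \<in> E" by (rule edgE[OF es(1) nP1 nP2])
      have e2: "{b, c} \<in> E" by (rule edgE[OF es(2) nP2 nP3])
      have e3: "{c, d} \<in> E" by (rule edgE[OF es(3) nP3 nP4])
      have e4: "{d, a} \<in> E" by (rule edgE[OF es(4) nP4 nP1])
      have e5: "{a, p} \<in> E" by (rule edgE[OF es(5) nP1 nP5])
      have e6: "{p, q} \<in> E" by (rule edgE[OF es(6) nP5 nP6])
      have e7: "{q, a} \<in> E" by (rule edgE[OF es(7) nP6 nP1])
      have "contains_H43 V E"
        unfolding contains_H43_def
        apply (rule exI[where x=a], rule exI[where x=b], rule exI[where x=c], rule exI[where x=d],
               rule exI[where x=p], rule exI[where x=q])
        using inV dis e1 e2 e3 e4 e5 e6 e7 by simp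
      thus False using hf by (simp add: H43_free_def)
    qed
  qed
  define y' where "y' = (\<lambda>v. if v \<in> P then eps else y v)"
  have V'ne: "V' \<noteq> {}" using wC by (auto simp: V'_def)
  have le': "QF V' (adjw E') y' \<le> spectral_radius V' E' * NF V' y'"
    using rho_props[OF finV' V'ne, of E'] by blast
  have split: "adjw E' = (\<lambda>u v. adjw EC u v + ((\<lambda>u v. if u = w \<and> v \<in> P then 1 else 0) u v
        + (\<lambda>u v. if u = w \<and> v \<in> P then 1 else 0) v u))"
  proof (intro ext)
    fix u v
    have "\<not> ({u, v} \<in> EC \<and> {u, v} \<in> Pend)" using disj by blast
    thus "adjw E' u v = adjw EC u v + ((\<lambda>u v. if u = w \<and> v \<in> P then 1 else 0) u v
        + (\<lambda>u v. if u = w \<and> v \<in> P then 1 else 0) v u)"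
      using pend_iff[of u v] wP by (auto simp: adjw_def E'_def)
  qed
  have yP: "\<forall>p\<in>P. y' p = eps" by (simp add: y'_def)
  have QP: "QF V' (\<lambda>u v. if u = w \<and> v \<in> P then 1 else 0) y' = real k * yw * eps"
    using QF_pend[OF finV' _ _ wP yP] wC wP cP yw by (simp add: V'_def y'_def)
  have QEC: "QF V' (adjw EC) y' = QF V (adjw E) y"
  proof -
    have "QF V' (adjw EC) y' = QF C (adjw EC) y'"
      by (rule QF_restrict[OF finV']) (use EC_C in \<open>auto simp: V'_def adjw_def split: if_splits\<close>)
    also have "\<dots> = QF C (adjw E) y"
      unfolding QF_def
    proof (intro sum.cong refl)
      fix v u assume "v \<in> C" "u \<in> C"
      have "adjw EC u v = adjw E u v"
        using clos2 \<open>u \<in> C\<close> by (auto simp: adjw_def EC_def)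
      moreover have "y' u = y u" "y' v = y v" using \<open>v \<in> C\<close> \<open>u \<in> C\<close> CP by (auto simp: y'_def)
      ultimately show "adjw EC u v * y' u * y' v = adjw E u v * y u * y v" by simp
    qed
    also have "\<dots> = QF V (adjw E) y"
      by (rule QF_restrict[symmetric, OF finV CV]) (auto simp: y_def xC_def split: if_splits)
    finally show ?thesis .
  qed
  have Q': "QF V' (adjw E') y' = QF V (adjw E) y + 2 * real k * yw * eps"
    unfolding split QF_add QEC QF_transpose[of V' "\<lambda>u v. if u = w \<and> v \<in> P then 1 else 0"] QP
    by simp
  have N': "NF V' y' = NF V y + real k * eps^2"
  proof -
    have "NF V' y' = NF C y' + NF P y'"
      unfolding NF_def V'_def using finC finP CP by (simp add: sum.union_disjoint)
    moreover have "NF P y' = real k * eps^2" using cP by (simp add: NF_def y'_def)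
    moreover have "NF C y' = NF C y" using CP unfolding NF_def y'_def by (intro sum.cong) auto
    moreover have "NF V y = NF C y"
      unfolding NF_def using finV CV by (intro sum.mono_neutral_right) (auto simp: y_def xC_def)
    ultimately show ?thesis by simp
  qed
  have Npos: "NF V' y' > 0"
    using N' NF_nonneg[of V y] kpos epspos by (simp add: add_nonneg_pos)
  have gap: "lam * (real k * eps^2) < 2 * real k * yw * eps"
  proof -
    have "lam * eps < 2 * yw" using lameps ywpos by linarith
    hence "(real k * eps) * (lam * eps) < (real k * eps) * (2 * yw)"
      using kpos epspos by (intro mult_strict_left_mono) auto
    thus ?thesis by (simp add: power2_eq_square mult_ac)
  qed
  have "lam * NF V' y' < QF V' (adjw E') y'"
    unfolding N' Q' using QxC Qy Ny gap by (simp add: distrib_left)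
  also note le'
  finally have "lam * NF V' y' < spectral_radius V' E' * NF V' y'" .
  hence "lam < spectral_radius V' E'" using Npos by simp
  moreover have "spectral_radius V' E' \<le> lam" using assms(3) cls by (simp add: lam_def)
  ultimately show False by simp
qed

end
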